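(* Let $X$ be a complex Banach space and let $T\in\mathcal{B}(X)$ be a power-bounded operator such that $\sigma(T)\cap\mathbb{T}=\{1\}$. Let $m:(0,\pi]\to(0,\infty)$ be defined by $m(\theta)=\sup\{\|R(\mathrm{e}^{\mathrm{i}\vartheta},T)\|:\theta\leq|\vartheta|\leq\pi\}$. Suppose that $$\lim_{\theta\to0}\max\big\{\|\theta R(\mathrm{e}^{\mathrm{i}\theta},T)\|,\|\theta R(\mathrm{e}^{-\mathrm{i}\theta},T)\|\big\}=\infty.$$ Then, given any right-inverse $m^{-1}$ of $m$ (defined on the range of $m$), there exist constants $c,C>0$ such that $\|T^n(I-T)\|\geq c\, m^{-1}(Cn)$ for all sufficiently large $n\geq0$.
   Context: $T$ is power-bounded if $\sup_{n\geq0}\|T^n\|<\infty$; $\mathbb{T}$ is the unit circle; $R(\lambda,T)=(\lambda-T)^{-1}$. The function $m$ is continuous and decreasing; a right-inverse $m^{-1}$ is a function on the range of $m$ with $m(m^{-1}(s))=s$. *)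

theory Defs
  imports "HOL-Analysis.Analysis"
begin

text \<open>Complex vector spaces: HOL-Analysis only has real vector spaces, so we
  add complex scalar multiplication compatible with the real one.\<close>

class complex_vector = real_vector +
  fixes scaleC :: "complex \<Rightarrow> 'a \<Rightarrow> 'a"  (infixr \<open>*\<^sub>C\<close> 75)
  assumes scaleC_add_right: "a *\<^sub>C (x + y) = a *\<^sub>C x + a *\<^sub>C y"
    and scaleC_add_left: "(a + b) *\<^sub>C x = a *\<^sub>C x + b *\<^sub>C x"
    and scaleC_scaleC: "a *\<^sub>C (b *\<^sub>C x) = (a * b) *\<^sub>C x"
    and scaleC_one: "1 *\<^sub>C x = x"
    and scaleC_of_real: "(complex_of_real r) *\<^sub>C x = r *\<^sub>R x"

class complex_normed_vector = complex_vector + real_normed_vector +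
  assumes norm_scaleC: "norm (a *\<^sub>C x) = cmod a * norm x"

class complex_banach = complex_normed_vector + complete_space

definition bounded_clinear_op :: "('a::complex_normed_vector \<Rightarrow> 'a) \<Rightarrow> bool" where
  "bounded_clinear_op T \<longleftrightarrow> bounded_linear T \<and> (\<forall>c x. T (c *\<^sub>C x) = c *\<^sub>C T x)"

definition is_resolvent :: "('a::complex_normed_vector \<Rightarrow> 'a) \<Rightarrow> complex \<Rightarrow> ('a \<Rightarrow> 'a) \<Rightarrow> bool" where
  "is_resolvent T l S \<longleftrightarrow> (\<forall>x. S (l *\<^sub>C x - T x) = x) \<and> (\<forall>x. l *\<^sub>C S x - T (S x) = x)"

definition resolvent_set :: "('a::complex_normed_vector \<Rightarrow> 'a) \<Rightarrow> complex set" where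
  "resolvent_set T = {l. \<exists>S. bounded_clinear_op S \<and> is_resolvent T l S}"

definition spectrum :: "('a::complex_normed_vector \<Rightarrow> 'a) \<Rightarrow> complex set" where
  "spectrum T = - resolvent_set T"

definition resolvent :: "complex \<Rightarrow> ('a::complex_normed_vector \<Rightarrow> 'a) \<Rightarrow> ('a \<Rightarrow> 'a)" where
  "resolvent l T = (THE S. is_resolvent T l S)"

definition power_bounded :: "('a::real_normed_vector \<Rightarrow> 'a) \<Rightarrow> bool" where
  "power_bounded T \<longleftrightarrow> (\<exists>M. \<forall>n. onorm (T ^^ n) \<le> M)"

definition resolvent_growth :: "('a::complex_normed_vector \<Rightarrow> 'a) \<Rightarrow> real \<Rightarrow> real" where
  "resolvent_growth T \<theta> = Sup {onorm (resolvent (cis t) T) | t. \<theta> \<le> \<bar>t\<bar> \<and> \<bar>t\<bar> \<le> pi}"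

instantiation complex :: complex_banach
begin
definition "scaleC_complex = ((*) :: complex \<Rightarrow> complex \<Rightarrow> complex)"
instance by standard (auto simp: scaleC_complex_def algebra_simps norm_mult scaleR_conv_of_real)
end

end

theory Submission
  imports Defs
begin


lemma scaleC_diff_right: "(a::complex) *\<^sub>C ((x::'a::complex_vector) - y) = a *\<^sub>C x - a *\<^sub>C y"
  by (metis add_diff_cancel diff_add_cancel scaleC_add_right)

lemma scaleC_diff_left: "((a::complex) - b) *\<^sub>C (x::'a::complex_vector) = a *\<^sub>C x - b *\<^sub>C x"
  by (metis add_diff_cancel diff_add_cancel scaleC_add_left)

lemma scaleC_zero_right [simp]: "(a::complex) *\<^sub>C (0::'a::complex_vector) = 0"
  by (metis diff_self scaleC_diff_right)

lemma bcop_lin: "bounded_clinear_op S \<Longrightarrow> bounded_linear S"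
  by (simp add: bounded_clinear_op_def)

lemma bcop_C: "bounded_clinear_op S \<Longrightarrow> S (c *\<^sub>C x) = c *\<^sub>C S x"
  by (simp add: bounded_clinear_op_def)

lemma bcop_diff: "bounded_clinear_op S \<Longrightarrow> S (x - y) = S x - S y"
  by (simp add: bounded_clinear_op_def linear_diff bounded_linear.linear)

lemma bcop_add: "bounded_clinear_op S \<Longrightarrow> S (x + y) = S x + S y"
  by (simp add: bounded_clinear_op_def linear_add bounded_linear.linear)

lemma bcop_funpow:
  assumes "bounded_clinear_op (T::'a::complex_normed_vector \<Rightarrow> 'a)"
  shows "bounded_clinear_op (T ^^ n)"
proof (induction n)
  case 0
  then show ?case by (simp add: bounded_clinear_op_def bounded_linear_ident id_def)
next
  case (Suc n)
  then show ?case using assms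
    by (auto simp: bounded_clinear_op_def intro: bounded_linear_compose)
qed

lemma resolvent_props:
  assumes "l \<in> resolvent_set T"
  shows "bounded_clinear_op (resolvent l T) \<and> is_resolvent T l (resolvent l T)"
proof -
  obtain S where S: "bounded_clinear_op S" "is_resolvent T l S"
    using assms by (auto simp: resolvent_set_def)
  have "resolvent l T = S"
    unfolding resolvent_def
  proof (rule the_equality)
    fix S' assume "is_resolvent T l S'"
    then show "S' = S" using S(2)
      by (metis is_resolvent_def ext)
  qed (fact S(2))
  with S show ?thesis by simp
qed

lemma cis_minus_one: "cmod (cis t - 1) = 2 * \<bar>sin (t/2)\<bar>"
proof -
  define a where "a = sin (t/2)"
  define b where "b = cos (t/2)"
  have ab: "a^2 + b^2 = 1" unfolding a_def b_def by simp
  have c: "cos t = 1 - 2 * a ^ 2" using cos_double_sin[of "t/2"] by (simp add: a_def)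
  have s: "sin t = 2 * a * b" using sin_double[of "t/2"] by (simp add: a_def b_def)
  have "cmod (cis t - 1) = sqrt ((cos t - 1)^2 + (sin t)^2)"
    by (simp add: cmod_def cis.sel)
  also have "(cos t - 1)^2 + (sin t)^2 = 4 * a^2 * (a^2 + b^2)"
    unfolding c s by algebra
  also have "\<dots> = (2 * a)^2" using ab by simp
  finally have "cmod (cis t - 1) = sqrt ((2 * a)^2)" .
  then show ?thesis unfolding real_sqrt_abs by (simp add: a_def abs_mult)
qed

lemma sin_half_lower:
  assumes "0 \<le> x" "x \<le> pi/2"
  shows "sin x \<ge> x / 4"
proof -
  have b: "\<bar>sin x - (\<Sum>m<3. sin_coeff m * x ^ m)\<bar> \<le> inverse (fact 3) * \<bar>x\<bar> ^ 3"
    by (rule Maclaurin_sin_bound)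
  have "(\<Sum>m<3. sin_coeff m * x ^ m) = x"
    by (simp add: eval_nat_numeral sin_coeff_def)
  with b assms have "\<bar>sin x - x\<bar> \<le> x^3/6" by (simp add: fact_numeral)
  then have 1: "sin x \<ge> x - x^3/6" by linarith
  have "x \<le> 2" using assms pi_less_4 by linarith
  then have "x*x \<le> 2*2" using assms by (intro mult_mono) auto
  then have "x * (x * x) \<le> x * 4" using assms by (intro mult_left_mono) auto
  then have "x^3 \<le> 4 * x" by (simp add: power3_eq_cube)
  with 1 assms(1) show ?thesis by linarith
qed

lemma rho_lower:
  assumes "\<bar>t\<bar> \<le> pi"
  shows "cmod (cis t - 1) \<ge> \<bar>t\<bar> / 4"
proof -
  have "sin (\<bar>t\<bar>/2) \<ge> \<bar>t\<bar>/8" using sin_half_lower[of "\<bar>t\<bar>/2"] assms by auto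
  moreover have "\<bar>sin (t/2)\<bar> = sin (\<bar>t\<bar>/2)"
  proof (cases "t \<ge> 0")
    case True then show ?thesis using assms by (simp add: sin_ge_zero)
  next
    case False
    then have "\<bar>t\<bar>/2 = -(t/2)" by simp
    then have "sin (\<bar>t\<bar>/2) = - sin (t/2)" by (simp only: sin_minus)
    moreover have "sin (\<bar>t\<bar>/2) \<ge> 0" using assms by (intro sin_ge_zero) auto
    ultimately show ?thesis by linarith
  qed
  ultimately show ?thesis by (simp add: cis_minus_one)
qed

lemma cis_dist_le: "cmod (cis a - cis b) \<le> \<bar>a - b\<bar>"
proof -
  have "cis a - cis b = cis b * (cis (a - b) - 1)"
    by (simp add: algebra_simps cis_mult)
  then have "cmod (cis a - cis b) = cmod (cis (a - b) - 1)" by (simp add: norm_mult)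
  also have "\<dots> = 2 * \<bar>sin ((a-b)/2)\<bar>" by (rule cis_minus_one)
  also have "\<dots> \<le> 2 * \<bar>(a-b)/2\<bar>" using abs_sin_x_le_abs_x[of "(a-b)/2"] by simp
  finally show ?thesis by simp
qed



lemma main_estimate:
  fixes T :: "'a::complex_normed_vector \<Rightarrow> 'a"
  assumes T_op: "bounded_clinear_op T"
    and K: "\<And>k. onorm (T ^^ k) \<le> K"
    and R: "bounded_clinear_op R" "is_resolvent T l R"
    and l1: "cmod l = 1" and ln1: "l \<noteq> 1"
    and a: "onorm (\<lambda>y. (T ^^ n) (y - T y)) \<le> cmod (l - 1) / 2"
  shows "onorm R \<le> 2 * K * (real n + 1 / cmod (l - 1))"
proof -
  have Tk: "bounded_clinear_op (T ^^ k)" for k by (rule bcop_funpow[OF T_op])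
  have Tkx: "norm ((T ^^ k) x) \<le> K * norm x" for k x
    using onorm[OF bcop_lin[OF Tk], of k x] K[of k]
    by (meson mult_right_mono norm_ge_zero order_trans)
  have K0: "0 \<le> K" using K[of 0] onorm_pos_le[OF bcop_lin[OF Tk[of 0]]] by linarith
  have Rx: "l *\<^sub>C R x - T (R x) = x" for x using R(2) by (simp add: is_resolvent_def)
  have step: "norm (l ^ k *\<^sub>C R x - (T ^^ k) (R x)) \<le> real k * K * norm x" for k x
  proof (induction k)
    case 0 then show ?case by (simp add: scaleC_one)
  next
    case (Suc k)
    have e1: "l *\<^sub>C (T ^^ k) (R x) - (T ^^ k) (T (R x)) = (T ^^ k) x"
      using Rx[of x] bcop_diff[OF Tk] bcop_C[OF Tk] by metis
    have "l ^ Suc k *\<^sub>C R x - (T ^^ Suc k) (R x)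
        = l *\<^sub>C (l ^ k *\<^sub>C R x - (T ^^ k) (R x)) + (l *\<^sub>C (T ^^ k) (R x) - (T ^^ k) (T (R x)))"
      by (simp add: scaleC_diff_right scaleC_scaleC funpow_swap1)
    also have "\<dots> = l *\<^sub>C (l ^ k *\<^sub>C R x - (T ^^ k) (R x)) + (T ^^ k) x" by (simp only: e1)
    finally have "norm (l ^ Suc k *\<^sub>C R x - (T ^^ Suc k) (R x))
        \<le> norm (l *\<^sub>C (l ^ k *\<^sub>C R x - (T ^^ k) (R x))) + norm ((T ^^ k) x)"
      by (metis norm_triangle_ineq)
    also have "\<dots> \<le> real k * K * norm x + K * norm x"
      using Suc Tkx[of k x] by (simp add: norm_scaleC l1)
    finally show ?case by (simp add: algebra_simps)
  qed
  define \<rho> where "\<rho> = cmod (l - 1)"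
  have \<rho>0: "\<rho> > 0" using ln1 by (simp add: \<rho>_def)
  define a where "a = onorm (\<lambda>y. (T ^^ n) (y - T y))"
  have blA: "bounded_linear (\<lambda>y. (T ^^ n) (y - T y))"
  proof -
    have "bounded_linear (\<lambda>y. y - T y)"
      by (rule bounded_linear_sub[OF bounded_linear_ident bcop_lin[OF T_op]])
    from bounded_linear_compose[OF bcop_lin[OF Tk[of n]] this] show ?thesis by simp
  qed
  have an: "norm ((T ^^ n) (y - T y)) \<le> a * norm y" for y
    using onorm[OF blA] by (simp add: a_def)
  have bound: "norm (R x) \<le> (2 * K * (real n + 1 / \<rho>)) * norm x" for x
  proof -
    have d: "R x - T (R x) = x - (l - 1) *\<^sub>C R x"
      using Rx[of x] by (simp add: scaleC_diff_left scaleC_one algebra_simps)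
    have "(T ^^ n) (R x - T (R x)) = (T ^^ n) x - (l - 1) *\<^sub>C (T ^^ n) (R x)"
      unfolding d by (simp add: bcop_diff[OF Tk] bcop_C[OF Tk])
    then have "(l - 1) *\<^sub>C (T ^^ n) (R x) = (T ^^ n) x - (T ^^ n) (R x - T (R x))"
      by (simp add: algebra_simps)
    then have "\<rho> * norm ((T ^^ n) (R x)) = norm ((T ^^ n) x - (T ^^ n) (R x - T (R x)))"
      by (metis \<rho>_def norm_scaleC)
    also have "\<dots> \<le> K * norm x + a * norm (R x)"
      using Tkx[of n x] an[of "R x"] by (meson add_mono norm_triangle_ineq4 order_trans)
    finally have 1: "\<rho> * norm ((T ^^ n) (R x)) \<le> K * norm x + a * norm (R x)" .
    have "norm (R x) = norm (l ^ n *\<^sub>C R x)" by (simp add: norm_scaleC norm_power l1)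
    also have "\<dots> \<le> norm (l ^ n *\<^sub>C R x - (T ^^ n) (R x)) + norm ((T ^^ n) (R x))"
      by (metis diff_add_cancel norm_triangle_ineq)
    also have "\<dots> \<le> real n * K * norm x + norm ((T ^^ n) (R x))"
      using step[of n x] by simp
    finally have 2: "norm (R x) \<le> real n * K * norm x + norm ((T ^^ n) (R x))" .
    have a2: "a \<le> \<rho> / 2" using assms(7) by (simp add: a_def \<rho>_def)
    have "\<rho> * norm (R x) \<le> \<rho> * real n * K * norm x + K * norm x + a * norm (R x)"
      using mult_left_mono[OF 2, of \<rho>] \<rho>0 1 by (simp add: algebra_simps)
    also have "a * norm (R x) \<le> \<rho> / 2 * norm (R x)" by (rule mult_right_mono[OF a2 norm_ge_zero])
    finally have "\<rho> / 2 * norm (R x) \<le> \<rho> * real n * K * norm x + K * norm x" by simp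
    then have "norm (R x) \<le> (2 / \<rho>) * (\<rho> * real n * K * norm x + K * norm x)"
      using \<rho>0 by (simp add: field_simps)
    also have "\<dots> = (2 * K * (real n + 1 / \<rho>)) * norm x"
      using \<rho>0 by (simp add: field_simps)
    finally show ?thesis .
  qed
  show ?thesis unfolding \<rho>_def[symmetric]
    by (rule onorm_bound[OF _ bound]) (use K0 \<rho>0 in auto)
qed

lemma perturb:
  fixes T :: "'a::complex_normed_vector \<Rightarrow> 'a"
  assumes R: "bounded_clinear_op R" "is_resolvent T l R"
    and S: "bounded_clinear_op S" "is_resolvent T m S"
  shows "onorm S \<le> onorm R + cmod (m - l) * onorm R * onorm S"
proof (rule onorm_bound)
  show "0 \<le> onorm R + cmod (m - l) * onorm R * onorm S"
    using onorm_pos_le[OF bcop_lin[OF R(1)]] onorm_pos_le[OF bcop_lin[OF S(1)]] by simp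
  fix x
  define y where "y = S x"
  have x: "x = m *\<^sub>C y - T y" using S(2) by (simp add: is_resolvent_def y_def)
  have eq: "m *\<^sub>C y - T y = (l *\<^sub>C y - T y) + (m - l) *\<^sub>C y"
    by (simp add: scaleC_diff_left algebra_simps)
  have x2: "x = (l *\<^sub>C y - T y) + (m - l) *\<^sub>C y" unfolding x by (rule eq)
  have "R x = R (l *\<^sub>C y - T y) + (m - l) *\<^sub>C R y"
    by (simp only: x2 bcop_add[OF R(1)] bcop_C[OF R(1)])
  then have "R x = y + (m - l) *\<^sub>C R y"
    using R(2) by (simp add: is_resolvent_def)
  then have "S x = R x - (m - l) *\<^sub>C R (S x)" by (simp add: y_def)
  then have "norm (S x) \<le> norm (R x) + cmod (m - l) * norm (R (S x))"
    by (metis norm_scaleC norm_triangle_ineq4)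
  also have "\<dots> \<le> onorm R * norm x + cmod (m - l) * (onorm R * (onorm S * norm x))"
  proof -
    have "norm (R (S x)) \<le> onorm R * norm (S x)" by (rule onorm[OF bcop_lin[OF R(1)]])
    also have "\<dots> \<le> onorm R * (onorm S * norm x)"
      by (intro mult_left_mono onorm[OF bcop_lin[OF S(1)]] onorm_pos_le[OF bcop_lin[OF R(1)]])
    finally show ?thesis
      by (intro add_mono onorm[OF bcop_lin[OF R(1)]] mult_left_mono) auto
  qed
  finally show "norm (S x) \<le> (onorm R + cmod (m - l) * onorm R * onorm S) * norm x"
    by (simp add: algebra_simps)
qed



lemma circ_res:
  assumes spec: "spectrum T \<inter> sphere 0 1 = {1}" and "cmod z = 1" "z \<noteq> 1"
  shows "z \<in> resolvent_set T"
proof (rule ccontr)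
  assume "z \<notin> resolvent_set T"
  then have "z \<in> spectrum T" by (simp add: spectrum_def)
  moreover have "z \<in> sphere 0 1" using assms(2) by simp
  ultimately show False using spec assms(3) by blast
qed

lemma cis_ne1: "0 < \<bar>t\<bar> \<Longrightarrow> \<bar>t\<bar> \<le> pi \<Longrightarrow> cis t \<noteq> 1"
  using rho_lower[of t] by auto

lemma cis_res:
  assumes spec: "spectrum T \<inter> sphere 0 1 = {1}" and "0 < \<bar>t\<bar>" "\<bar>t\<bar> \<le> pi"
  shows "bounded_clinear_op (resolvent (cis t) T) \<and> is_resolvent T (cis t) (resolvent (cis t) T)"
  by (rule resolvent_props[OF circ_res[OF spec]]) (use cis_ne1 assms in auto)

lemma real_aux:
  fixes N M D e :: real
  assumes "0 \<le> N" "0 \<le> M" "0 \<le> D" "M \<le> N + D*N*M" "N \<le> M + D*N*M"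
    "D * (2*N+1) < 1" "D * (2*N*N+1) < e"
  shows "\<bar>M - N\<bar> < e"
proof -
  have dn: "D * N \<le> 1/2" using assms(6) assms(3) by (simp add: algebra_simps)
  have "D*N*M \<le> M/2" using mult_right_mono[OF dn assms(2)] by simp
  then have M2: "M \<le> 2*N" using assms(4) by linarith
  have "D*N*M \<le> D*N*(2*N)" using M2 assms by (intro mult_left_mono) auto
  also have "\<dots> \<le> D*(2*N*N+1)" using assms(3) by (simp add: algebra_simps)
  finally have "D*N*M < e" using assms(7) by linarith
  then show ?thesis using assms(4,5) by linarith
qed

lemma g_cont:
  fixes T :: "'a::complex_normed_vector \<Rightarrow> 'a"
  assumes spec: "spectrum T \<inter> sphere 0 1 = {1}" and d0: "0 < \<delta>"
  shows "continuous_on ({\<delta>..pi} \<union> {-pi..-\<delta>}) (\<lambda>t. onorm (resolvent (cis t) T))"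
  unfolding continuous_on_iff
proof (intro ballI allI impI)
  let ?K = "{\<delta>..pi} \<union> {-pi..-\<delta>}"
  have inK: "0 < \<bar>t\<bar> \<and> \<bar>t\<bar> \<le> pi" if "t \<in> ?K" for t
    using that d0 by auto
  fix x e :: real assume x: "x \<in> ?K" and e: "0 < e"
  define N where "N = onorm (resolvent (cis x) T)"
  have Rx: "bounded_clinear_op (resolvent (cis x) T)" "is_resolvent T (cis x) (resolvent (cis x) T)"
    using cis_res[OF spec] inK[OF x] by auto
  have N0: "0 \<le> N" unfolding N_def by (rule onorm_pos_le[OF bcop_lin[OF Rx(1)]])
  define d where "d = min (1/(2*N+1)) (e/(2*N*N+1))"
  have NN: "2*N*N+1 > 0" using N0 by (simp add: add_nonneg_pos)
  have dpos: "d > 0" using N0 e NN by (simp add: d_def)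
  show "\<exists>d>0. \<forall>x'\<in>?K. dist x' x < d \<longrightarrow>
      dist (onorm (resolvent (cis x') T)) (onorm (resolvent (cis x) T)) < e"
  proof (intro exI[of _ d] conjI ballI impI dpos)
    fix y assume y: "y \<in> ?K" and dy: "dist y x < d"
    have Ry: "bounded_clinear_op (resolvent (cis y) T)" "is_resolvent T (cis y) (resolvent (cis y) T)"
      using cis_res[OF spec] inK[OF y] by auto
    define M where "M = onorm (resolvent (cis y) T)"
    have M0: "0 \<le> M" unfolding M_def by (rule onorm_pos_le[OF bcop_lin[OF Ry(1)]])
    define D where "D = cmod (cis y - cis x)"
    have D0: "0 \<le> D" by (simp add: D_def)
    have Dd: "D < d" using cis_dist_le[of y x] dy by (simp add: D_def dist_real_def)
    have 1: "M \<le> N + D*N*M" using perturb[OF Rx Ry] by (simp add: M_def N_def D_def)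
    have 2: "N \<le> M + D*N*M" using perturb[OF Ry Rx]
      by (simp add: M_def N_def D_def norm_minus_commute mult.commute mult.left_commute)
    have 3: "D * (2*N+1) < 1"
    proof -
      have "D * (2*N+1) < d * (2*N+1)" using Dd N0 by (intro mult_strict_right_mono) auto
      also have "\<dots> \<le> 1/(2*N+1) * (2*N+1)" using N0 by (intro mult_right_mono) (auto simp: d_def)
      finally show ?thesis using N0 by simp
    qed
    have 4: "D * (2*N*N+1) < e"
    proof -
      have "D * (2*N*N+1) < d * (2*N*N+1)" using Dd NN by (intro mult_strict_right_mono) auto
      also have "\<dots> \<le> e/(2*N*N+1) * (2*N*N+1)" using N0 by (intro mult_right_mono) (auto simp: d_def)
      finally show ?thesis using NN by simp
    qed
    show "dist (onorm (resolvent (cis y) T)) (onorm (resolvent (cis x) T)) < e"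
      using real_aux[OF N0 M0 D0 1 2 3 4] by (simp add: dist_real_def M_def N_def)
  qed
qed



lemma cis_abs_pi: "\<bar>t\<bar> = pi \<Longrightarrow> cis t = cis pi"
proof (cases "t \<ge> 0")
  case False
  assume "\<bar>t\<bar> = pi"
  with False have "t = -pi" by linarith
  then show ?thesis by (simp add: complex_eq_iff)
qed auto

lemma range_m:
  fixes T :: "'a::complex_normed_vector \<Rightarrow> 'a"
  assumes spec: "spectrum T \<inter> sphere 0 1 = {1}"
    and s: "s > onorm (resolvent (cis pi) T)"
    and t0: "0 < \<bar>t0\<bar>" "\<bar>t0\<bar> \<le> pi" "onorm (resolvent (cis t0) T) \<ge> s"
  shows "\<exists>\<theta>\<in>{0<..pi}. resolvent_growth T \<theta> = s"
proof -
  define g where "g t = onorm (resolvent (cis t) T)" for t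
  define \<delta> where "\<delta> = \<bar>t0\<bar>"
  define K where "K = {\<delta>..pi} \<union> {-pi..-\<delta>}"
  have d0: "0 < \<delta>" using t0 by (simp add: \<delta>_def)
  have gc: "continuous_on K g" unfolding K_def g_def by (rule g_cont[OF spec d0])
  have inK: "t \<in> K \<longleftrightarrow> \<delta> \<le> \<bar>t\<bar> \<and> \<bar>t\<bar> \<le> pi" for t
    using d0 unfolding K_def by auto
  define B where "B = K \<inter> g -` {s..}"
  have clK: "closed K" unfolding K_def by auto
  have "closed B" unfolding B_def by (rule continuous_closed_preimage[OF gc clK]) auto
  moreover have "bounded B"
    by (rule bounded_subset[of "cball 0 pi"]) (auto simp: B_def inK)
  ultimately have cB: "compact B" by (simp add: compact_eq_bounded_closed)
  have t0B: "t0 \<in> B" using t0 by (simp add: B_def inK \<delta>_def g_def)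
  obtain ts where ts: "ts \<in> B" "\<And>y. y \<in> B \<Longrightarrow> \<bar>y\<bar> \<le> \<bar>ts\<bar>"
    using continuous_attains_sup[OF cB _ continuous_on_rabs[OF continuous_on_id]] t0B by blast
  define \<theta> where "\<theta> = \<bar>ts\<bar>"
  have th: "\<delta> \<le> \<theta>" "\<theta> \<le> pi" using ts(1) by (auto simp: B_def inK \<theta>_def)
  have le: "g t \<le> s" if "\<theta> \<le> \<bar>t\<bar>" "\<bar>t\<bar> \<le> pi" for t
  proof (rule ccontr)
    assume gt: "\<not> g t \<le> s"
    have tK: "t \<in> K" using that th by (simp add: inK)
    then have "t \<in> B" using gt by (simp add: B_def)
    then have teq: "\<bar>t\<bar> = \<theta>" using ts(2) that by (force simp: \<theta>_def)
    show False
    proof (cases "\<bar>t\<bar> = pi")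
      case True
      then have "g t = g pi" by (simp add: g_def cis_abs_pi)
      then show False using gt s by (simp add: g_def)
    next
      case False
      then have tp: "\<bar>t\<bar> < pi" using that by simp
      obtain d where d: "d > 0" "\<And>y. y \<in> K \<Longrightarrow> dist y t < d \<Longrightarrow> dist (g y) (g t) < g t - s"
        using gc tK gt unfolding continuous_on_iff by (metis diff_gt_0_iff_gt not_le)
      define \<eta> where "\<eta> = min (d/2) ((pi - \<bar>t\<bar>)/2)"
      have e1: "\<eta> \<le> (pi - \<bar>t\<bar>)/2" "\<eta> \<le> d/2" unfolding \<eta>_def by (rule min.cobounded2, rule min.cobounded1)
      have eta: "0 < \<eta>" "\<eta> < d" "\<bar>t\<bar> + \<eta> \<le> pi" using d(1) tp e1 by (auto simp: \<eta>_def min_def)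
      define y where "y = (if t \<ge> 0 then t + \<eta> else t - \<eta>)"
      have ay: "\<bar>y\<bar> = \<bar>t\<bar> + \<eta>" using eta by (auto simp: y_def)
      have dy: "dist y t < d" using eta by (auto simp: y_def dist_real_def)
      have yK: "y \<in> K" using ay eta teq th by (simp add: inK)
      have "dist (g y) (g t) < g t - s" by (rule d(2)[OF yK dy])
      then have "g y \<ge> s" by (simp add: dist_real_def)
      then have "y \<in> B" using yK by (simp add: B_def)
      then have "\<bar>y\<bar> \<le> \<theta>" using ts(2) by (simp add: \<theta>_def)
      then show False using ay eta teq by simp
    qed
  qed
  have gts: "g ts = s"
  proof -
    have "g ts \<ge> s" using ts(1) by (simp add: B_def)
    moreover have "g ts \<le> s" using le th by (simp add: \<theta>_def)
    ultimately show ?thesis by simp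
  qed
  have "resolvent_growth T \<theta> = s"
    unfolding resolvent_growth_def
  proof (rule cSup_eq_maximum)
    show "s \<in> {onorm (resolvent (cis t) T) |t. \<theta> \<le> \<bar>t\<bar> \<and> \<bar>t\<bar> \<le> pi}"
      using gts th by (auto simp: g_def \<theta>_def)
  next
    fix x assume "x \<in> {onorm (resolvent (cis t) T) |t. \<theta> \<le> \<bar>t\<bar> \<and> \<bar>t\<bar> \<le> pi}"
    then show "x \<le> s" using le by (auto simp: g_def)
  qed
  moreover have "\<theta> \<in> {0<..pi}" using th d0 by simp
  ultimately show ?thesis by blast
qed



theorem corollary2p6:
  fixes T :: "'a::complex_banach \<Rightarrow> 'a"
    and minv :: "real \<Rightarrow> real"
  assumes T_op: "bounded_clinear_op T"
    and pb: "power_bounded T"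
    and spec: "spectrum T \<inter> sphere 0 1 = {1}"
    and blowup: "filterlim (\<lambda>\<theta>::real. max (onorm (\<lambda>x. \<theta> *\<^sub>R resolvent (cis \<theta>) T x))
                                         (onorm (\<lambda>x. \<theta> *\<^sub>R resolvent (cis (- \<theta>)) T x)))
                   at_top (at 0)"
    and minv: "\<forall>s \<in> resolvent_growth T ` {0<..pi}.
                 minv s \<in> {0<..pi} \<and> resolvent_growth T (minv s) = s"
  shows "\<exists>c C. c > 0 \<and> C > 0 \<and>
           (\<forall>\<^sub>F n in sequentially. onorm (\<lambda>x. (T ^^ n) (x - T x)) \<ge> c * minv (C * real n))"
proof -
  define F where "F = (\<lambda>\<theta>::real. max (onorm (\<lambda>x. \<theta> *\<^sub>R resolvent (cis \<theta>) T x))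
                                         (onorm (\<lambda>x. \<theta> *\<^sub>R resolvent (cis (- \<theta>)) T x)))"
  define g where "g t = onorm (resolvent (cis t) T)" for t
  obtain M where M: "\<And>n. onorm (T ^^ n) \<le> M" using pb by (auto simp: power_bounded_def)
  define K where "K = max M 1"
  have K: "\<And>n. onorm (T ^^ n) \<le> K" using M by (simp add: K_def le_max_iff_disj)
  have K1: "K \<ge> 1" by (simp add: K_def)
  have bl: "\<forall>Z. \<exists>d>0. \<forall>\<theta>. \<theta> \<noteq> 0 \<and> \<bar>\<theta>\<bar> < d \<longrightarrow> Z < F \<theta>"
  proof
    fix Z
    have "eventually (\<lambda>\<theta>. Z < F \<theta>) (at (0::real))"
      using blowup unfolding F_def filterlim_at_top_dense by blast
    then show "\<exists>d>0. \<forall>\<theta>. \<theta> \<noteq> 0 \<and> \<bar>\<theta>\<bar> < d \<longrightarrow> Z < F \<theta>"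
      unfolding eventually_at by (auto simp: dist_real_def)
  qed
  have Fform: "F \<theta> = \<bar>\<theta>\<bar> * max (g \<theta>) (g (-\<theta>))" if "0 < \<bar>\<theta>\<bar>" "\<bar>\<theta>\<bar> \<le> pi" for \<theta>
  proof -
    have r1: "bounded_linear (resolvent (cis \<theta>) T)" using cis_res[OF spec, of \<theta>] that bcop_lin by blast
    have r2: "bounded_linear (resolvent (cis (-\<theta>)) T)" using cis_res[OF spec, of "-\<theta>"] that bcop_lin by auto
    show ?thesis unfolding F_def g_def onorm_scaleR[OF r1] onorm_scaleR[OF r2]
      using that(1) by (simp add: max_def mult_le_cancel_left_pos)
  qed
  obtain \<delta>0 where d0: "\<delta>0 > 0" "\<And>\<theta>. \<theta> \<noteq> 0 \<Longrightarrow> \<bar>\<theta>\<bar> < \<delta>0 \<Longrightarrow> 16 * K < F \<theta>"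
    using bl by blast
  have gpi0: "g pi \<ge> 0" unfolding g_def
    using cis_res[OF spec, of pi] bcop_lin onorm_pos_le by auto
  have range: "s \<in> resolvent_growth T ` {0<..pi}" if s: "s > g pi" for s
  proof -
    have s0: "s \<ge> 0" using s gpi0 by simp
    obtain d where d: "d > 0" "\<And>\<theta>. \<theta> \<noteq> 0 \<Longrightarrow> \<bar>\<theta>\<bar> < d \<Longrightarrow> s * pi < F \<theta>" using bl by blast
    define \<theta> where "\<theta> = min (d/2) pi"
    have th: "0 < \<theta>" "\<theta> < d" "\<theta> \<le> pi" using d(1) by (auto simp: \<theta>_def min_def)
    have "s * pi < \<theta> * max (g \<theta>) (g (-\<theta>))" using d(2)[of \<theta>] th Fform[of \<theta>] by simp
    moreover have "s * \<theta> \<le> s * pi" using s0 th by (simp add: mult_left_mono)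
    ultimately have "s * \<theta> < \<theta> * max (g \<theta>) (g (-\<theta>))" by linarith
    then have "s < max (g \<theta>) (g (-\<theta>))" using th by (simp add: mult.commute)
    then obtain t0 where t0: "t0 = \<theta> \<or> t0 = -\<theta>" "g t0 \<ge> s"
      by (metis less_imp_le max_def)
    have "\<exists>\<theta>'\<in>{0<..pi}. resolvent_growth T \<theta>' = s"
      by (rule range_m[OF spec _ _ _ , of s t0]) (use s t0 th in \<open>auto simp: g_def\<close>)
    then show ?thesis by force
  qed
  define N where "N = nat \<lceil>g pi + 4 / \<delta>0\<rceil> + 1"
  have ev: "\<forall>\<^sub>F n in sequentially. onorm (\<lambda>x. (T ^^ n) (x - T x)) \<ge> (1/8) * minv ((4*K) * real n)"
    unfolding eventually_sequentially
  proof (intro exI[of _ N] allI impI)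
    fix n assume nN: "N \<le> n"
    have n1: "real n \<ge> g pi + 4 / \<delta>0 + 1" using nN unfolding N_def by linarith
    have npos: "real n > 0" using n1 gpi0 d0(1) by (smt (verit) divide_pos_pos)
    define s where "s = (4*K) * real n"
    have "s \<ge> real n" using K1 npos by (simp add: s_def)
    then have "s > g pi" using n1 d0(1) by (smt (verit) divide_pos_pos)
    then have "s \<in> resolvent_growth T ` {0<..pi}" by (rule range)
    with minv have mi: "minv s \<in> {0<..pi}" "resolvent_growth T (minv s) = s" by auto
    define \<theta> where "\<theta> = minv s"
    have th: "0 < \<theta>" "\<theta> \<le> pi" using mi by (auto simp: \<theta>_def)
    define a where "a = onorm (\<lambda>x. (T ^^ n) (x - T x))"
    show "onorm (\<lambda>x. (T ^^ n) (x - T x)) \<ge> (1/8) * minv ((4*K) * real n)"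
    proof (rule ccontr)
      assume "\<not> ?thesis"
      then have a8: "a < \<theta> / 8" by (simp add: a_def \<theta>_def s_def)
      have hb: "g t \<le> 2 * K * (real n + 4 / \<theta>)" if t: "\<theta> \<le> \<bar>t\<bar>" "\<bar>t\<bar> \<le> pi" for t
      proof -
        have tp: "0 < \<bar>t\<bar>" using th t by linarith
        have rho: "cmod (cis t - 1) \<ge> \<bar>t\<bar> / 4" by (rule rho_lower[OF t(2)])
        have rho2: "cmod (cis t - 1) \<ge> \<theta> / 4" using rho t by linarith
        have rp: "cmod (cis t - 1) > 0" using rho2 th by linarith
        have Rt: "bounded_clinear_op (resolvent (cis t) T)" "is_resolvent T (cis t) (resolvent (cis t) T)"
          using cis_res[OF spec tp t(2)] by auto
        have aa: "onorm (\<lambda>y. (T ^^ n) (y - T y)) \<le> cmod (cis t - 1) / 2"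
          using a8 rho2 unfolding a_def by linarith
        have "g t \<le> 2 * K * (real n + 1 / cmod (cis t - 1))"
          unfolding g_def
          by (rule main_estimate[OF T_op K Rt]) (use cis_ne1[OF tp t(2)] aa in auto)
        also have "1 / cmod (cis t - 1) \<le> 4 / \<theta>"
          using rho2 th rp by (simp add: field_simps)
        then have "2 * K * (real n + 1 / cmod (cis t - 1)) \<le> 2 * K * (real n + 4 / \<theta>)"
          using K1 by (intro mult_left_mono) auto
        finally show ?thesis .
      qed
      have "resolvent_growth T \<theta> \<le> 2 * K * (real n + 4 / \<theta>)"
        unfolding resolvent_growth_def
      proof (rule cSup_least)
        show "{onorm (resolvent (cis t) T) |t. \<theta> \<le> \<bar>t\<bar> \<and> \<bar>t\<bar> \<le> pi} \<noteq> {}"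
          using th by (auto intro!: exI[of _ \<theta>])
        fix x assume "x \<in> {onorm (resolvent (cis t) T) |t. \<theta> \<le> \<bar>t\<bar> \<and> \<bar>t\<bar> \<le> pi}"
        then show "x \<le> 2 * K * (real n + 4 / \<theta>)" using hb by (auto simp: g_def)
      qed
      then have "4 * K * real n \<le> 2 * K * (real n + 4 / \<theta>)"
        using mi by (simp add: \<theta>_def s_def)
      then have "2 * K * real n \<le> 8 * K / \<theta>" by (simp add: algebra_simps)
      then have "2 * K * real n * \<theta> \<le> 8 * K" using th by (simp add: field_simps)
      then have nth: "real n * \<theta> \<le> 4" using K1 by (simp add: algebra_simps)
      have "\<theta> \<le> 4 / real n" using nth npos by (simp add: field_simps)
      also have "4 / real n < \<delta>0"
      proof -
        have "real n > 4 / \<delta>0" using n1 gpi0 by linarith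
        then show ?thesis using d0(1) npos by (simp add: field_simps)
      qed
      finally have "16 * K < F \<theta>" using d0(2)[of \<theta>] th by simp
      moreover have "F \<theta> \<le> 16 * K"
      proof -
        have "F \<theta> = \<theta> * max (g \<theta>) (g (-\<theta>))" using Fform[of \<theta>] th by simp
        also have "\<dots> \<le> \<theta> * (2 * K * (real n + 4 / \<theta>))"
          using hb[of \<theta>] hb[of "-\<theta>"] th by (intro mult_left_mono) auto
        also have "\<dots> = 2 * K * (real n * \<theta>) + 8 * K" using th by (simp add: field_simps)
        also have "\<dots> \<le> 2 * K * 4 + 8 * K" using nth K1 by (intro add_mono mult_left_mono) auto
        finally show ?thesis by simp
      qed
      ultimately show False by simp
    qed
  qed
  show ?thesis
    by (rule exI[of _ "1/8"], rule exI[of _ "4*K"]) (use ev K1 in auto)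
qed

end
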